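(* Let $a\ge1$ be an integer and $R>0$. For $\zeta\in D^a_R$ the function $\mathcal{R}^a(\zeta)(t)=\zeta(t)t^a+a\int_t^\infty\zeta(s)s^{a-1}ds$, $t>0$, extends continuously to $[0,\infty)$, and the resulting map $\mathcal{R}^a:D^a_R\to C_{c,R}([0,\infty))$ is a topological isomorphism (a continuous linear bijection with continuous inverse).
   Context: $C_b((0,\infty))$: continuous functions on $(0,\infty)$ with support bounded above. $D^a_R$: the set of $\zeta\in C_b((0,\infty))$ with support in $(0,R]$, $\lim_{t\to0}t^a\zeta(t)=0$, and $\lim_{t\to0}\int_t^\infty\zeta(r)r^{a-1}dr$ existing and finite, with norm $\|\zeta\|_{D^a}=\sup_{t>0}t^a|\zeta(t)|+\sup_{t>0}|\int_t^\infty\zeta(r)r^{a-1}dr|$. $C_{c,R}([0,\infty))$: continuous functions on $[0,\infty)$ supported in $[0,R]$, with the maximum norm. *)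

theory Defs
  imports "HOL-Analysis.Analysis"
begin

text \<open>Functions on (0,infinity) resp. [0,infinity) are represented as real => real,
  normalised to be 0 outside their domain (t <= 0, resp. t < 0).\<close>

definition tailint :: "nat \<Rightarrow> (real \<Rightarrow> real) \<Rightarrow> real \<Rightarrow> real" where
  "tailint a \<zeta> t = integral {t..} (\<lambda>r. \<zeta> r * r ^ (a - 1))"

definition Dspace :: "nat \<Rightarrow> real \<Rightarrow> (real \<Rightarrow> real) set" where
  "Dspace a R = {\<zeta>. continuous_on {0<..} \<zeta>
      \<and> (\<forall>t. t \<le> 0 \<longrightarrow> \<zeta> t = 0)
      \<and> (\<forall>t. t > R \<longrightarrow> \<zeta> t = 0)
      \<and> ((\<lambda>t. t ^ a * \<zeta> t) \<longlongrightarrow> 0) (at_right 0)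
      \<and> (\<exists>L. (tailint a \<zeta> \<longlongrightarrow> L) (at_right 0))}"

definition Dnorm :: "nat \<Rightarrow> (real \<Rightarrow> real) \<Rightarrow> real" where
  "Dnorm a \<zeta> = (SUP t\<in>{0<..}. \<bar>t ^ a * \<zeta> t\<bar>) + (SUP t\<in>{0<..}. \<bar>tailint a \<zeta> t\<bar>)"

definition Ccspace :: "real \<Rightarrow> (real \<Rightarrow> real) set" where
  "Ccspace R = {f. continuous_on {0..} f
      \<and> (\<forall>t. t < 0 \<longrightarrow> f t = 0)
      \<and> (\<forall>t. t > R \<longrightarrow> f t = 0)}"

definition supnorm :: "(real \<Rightarrow> real) \<Rightarrow> real" where
  "supnorm f = (SUP t\<in>{0..}. \<bar>f t\<bar>)"

definition Rmap :: "nat \<Rightarrow> (real \<Rightarrow> real) \<Rightarrow> real \<Rightarrow> real" where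
  "Rmap a \<zeta> t = \<zeta> t * t ^ a + real a * tailint a \<zeta> t"

definition Rext :: "nat \<Rightarrow> (real \<Rightarrow> real) \<Rightarrow> real \<Rightarrow> real" where
  "Rext a \<zeta> t = (if t > 0 then Rmap a \<zeta> t
      else if t = 0 then Lim (at_right 0) (Rmap a \<zeta>) else 0)"

end

theory Submission
  imports Defs
begin

lemma tail_hasint:
  fixes g :: "real \<Rightarrow> real"
  assumes cg: "continuous_on {0<..} g" and z: "\<And>r. r > R \<Longrightarrow> g r = 0"
    and t: "0 < t" "t \<le> b" "R \<le> b"
  shows "(g has_integral integral {t..b} g) {t..}"
proof -
  have "continuous_on {t..b} g" using cg by (rule continuous_on_subset) (use t in auto)
  then have "(g has_integral integral {t..b} g) {t..b}"
    using integrable_continuous_interval integrable_integral by blast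
  then have "((\<lambda>x. if t \<le> x then g x else 0) has_integral integral {t..b} g) {t..b}"
    by (rule has_integral_eq[rotated]) auto
  then have "((\<lambda>x. if t \<le> x then g x else 0) has_integral integral {t..b} g) {t..}"
    by (rule has_integral_on_superset) (use z t in auto)
  then show ?thesis
    by (rule has_integral_eq[rotated]) auto
qed

lemma tail_eq:
  fixes g :: "real \<Rightarrow> real"
  assumes cg: "continuous_on {0<..} g" and z: "\<And>r. r > R \<Longrightarrow> g r = 0"
    and t: "0 < t" "t \<le> b" "R \<le> b"
  shows "integral {t..} g = integral {t..b} g" "g integrable_on {t..}"
  using tail_hasint[OF assms] by (auto simp: integral_unique has_integral_integrable)

lemma tail_zero:
  fixes g :: "real \<Rightarrow> real"
  assumes z: "\<And>r. r > R \<Longrightarrow> g r = 0" and t: "R < t"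
  shows "integral {t..} g = 0"
proof -
  have "integral {t..} g = integral {t..} (\<lambda>_. 0::real)"
    by (rule integral_cong) (use z t in auto)
  then show ?thesis by simp
qed

lemma tail_deriv:
  fixes g :: "real \<Rightarrow> real"
  assumes cg: "continuous_on {0<..} g" and z: "\<And>r. r > R \<Longrightarrow> g r = 0"
    and t: "0 < t"
  shows "((\<lambda>x. integral {x..} g) has_real_derivative - g t) (at t)"
proof -
  define b where "b = max R t + 1"
  define c where "c = t / 2"
  have cb: "continuous_on {c..b} g" using cg by (rule continuous_on_subset) (use t in \<open>auto simp: c_def\<close>)
  have "((\<lambda>x. integral {x..b} g) has_real_derivative -g t) (at t within {c..b})"
    by (rule integral_has_real_derivative'[OF cb]) (auto simp: c_def b_def t)
  then have d: "((\<lambda>x. integral {x..b} g) has_real_derivative -g t) (at t)"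
    using at_within_interior[of t "{c..b}"] t by (auto simp: c_def b_def)
  show ?thesis
  proof (rule has_field_derivative_transform_within_open[OF d, of "{c<..<b}"])
    show "t \<in> {c<..<b}" using t by (auto simp: c_def b_def)
    fix x assume "x \<in> {c<..<b}"
    then show "integral {x..b} g = integral {x..} g"
      using tail_eq(1)[of g R x b, OF cg z] t by (auto simp: c_def b_def)
  qed auto
qed

lemma tail_cont:
  fixes g :: "real \<Rightarrow> real"
  assumes cg: "continuous_on {0<..} g" and z: "\<And>r. r > R \<Longrightarrow> g r = 0"
  shows "continuous_on {0<..} (\<lambda>x. integral {x..} g)"
  by (intro continuous_at_imp_continuous_on ballI DERIV_isCont[OF tail_deriv[OF assms]]) auto

lemma zero_deriv_const:
  fixes h :: "real \<Rightarrow> real"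
  assumes "\<And>x. x > 0 \<Longrightarrow> (h has_real_derivative 0) (at x)" "x > 0" "y > 0"
  shows "h x = h y"
proof -
  have "\<exists>c. \<forall>x\<in>{0<..}. h x = c"
  proof (rule has_field_derivative_zero_constant)
    fix x :: real assume x: "x \<in> {0<..}"
    show "(h has_real_derivative 0) (at x within {0<..})"
      by (rule has_field_derivative_at_within[OF assms(1)]) (use x in auto)
  qed (simp add: convex_real_interval)
  then obtain c where "\<forall>x\<in>{0<..}. h x = c" by blast
  then show ?thesis using assms(2,3) by simp
qed



lemma D_cont: "\<zeta> \<in> Dspace a R \<Longrightarrow> continuous_on {0<..} \<zeta>"
  and D_neg: "\<zeta> \<in> Dspace a R \<Longrightarrow> t \<le> 0 \<Longrightarrow> \<zeta> t = 0"
  and D_big: "\<zeta> \<in> Dspace a R \<Longrightarrow> t > R \<Longrightarrow> \<zeta> t = 0"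
  and D_lim: "\<zeta> \<in> Dspace a R \<Longrightarrow> ((\<lambda>t. t ^ a * \<zeta> t) \<longlongrightarrow> 0) (at_right 0)"
  and D_tlim: "\<zeta> \<in> Dspace a R \<Longrightarrow> \<exists>L. (tailint a \<zeta> \<longlongrightarrow> L) (at_right 0)"
  by (auto simp: Dspace_def)

lemma D_integrand_cont: "\<zeta> \<in> Dspace a R \<Longrightarrow> continuous_on {0<..} (\<lambda>r. \<zeta> r * r ^ (a - 1))"
  by (intro continuous_intros D_cont)

lemma D_integrand_big: "\<zeta> \<in> Dspace a R \<Longrightarrow> r > R \<Longrightarrow> \<zeta> r * r ^ (a - 1) = 0"
  by (simp add: D_big)

lemma tailint_deriv:
  assumes "\<zeta> \<in> Dspace a R" "t > 0"
  shows "(tailint a \<zeta> has_real_derivative - (\<zeta> t * t ^ (a - 1))) (at t)"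
  unfolding tailint_def[abs_def]
  using tail_deriv[of "\<lambda>r. \<zeta> r * r ^ (a - 1)" R t] D_integrand_cont[OF assms(1)]
    D_integrand_big[OF assms(1)] assms(2) by auto

lemma tailint_big: "\<zeta> \<in> Dspace a R \<Longrightarrow> t > R \<Longrightarrow> tailint a \<zeta> t = 0"
  unfolding tailint_def using tail_zero[of R "\<lambda>r. \<zeta> r * r ^ (a - 1)" t] D_integrand_big by blast

lemma tailint_integrable:
  assumes "\<zeta> \<in> Dspace a R" "t > 0"
  shows "(\<lambda>r. \<zeta> r * r ^ (a - 1)) integrable_on {t..}"
  using tail_eq(2)[of "\<lambda>r. \<zeta> r * r ^ (a - 1)" R t "max t R"] D_integrand_cont[OF assms(1)]
    D_integrand_big[OF assms(1)] assms(2) by auto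

lemma tailint_cont: "\<zeta> \<in> Dspace a R \<Longrightarrow> continuous_on {0<..} (tailint a \<zeta>)"
  by (intro continuous_at_imp_continuous_on ballI DERIV_isCont[OF tailint_deriv]) auto

lemma tailint_lin:
  assumes "\<zeta> \<in> Dspace a R" "\<eta> \<in> Dspace a R" "t > 0"
  shows "tailint a (\<lambda>t. c * \<zeta> t + \<eta> t) t = c * tailint a \<zeta> t + tailint a \<eta> t"
proof -
  have e: "(\<lambda>r. (c * \<zeta> r + \<eta> r) * r ^ (a - 1)) = (\<lambda>r. c * (\<zeta> r * r ^ (a - 1)) + \<eta> r * r ^ (a - 1))"
    by (auto simp: algebra_simps)
  have i1: "(\<lambda>r. c * (\<zeta> r * r ^ (a - 1))) integrable_on {t..}"
    using integrable_on_cmult_left[OF tailint_integrable[OF assms(1,3)]] by simp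
  show ?thesis unfolding tailint_def e
    by (subst integral_add[OF i1 tailint_integrable[OF assms(2,3)]]) simp
qed

lemma D_lincomb:
  assumes "\<zeta> \<in> Dspace a R" "\<eta> \<in> Dspace a R"
  shows "(\<lambda>t. c * \<zeta> t + \<eta> t) \<in> Dspace a R"
proof -
  have l: "((\<lambda>t. c * (t ^ a * \<zeta> t) + t ^ a * \<eta> t) \<longlongrightarrow> c * 0 + 0) (at_right 0)"
    by (intro tendsto_intros D_lim[OF assms(1)] D_lim[OF assms(2)])
  obtain L1 L2 where L1: "(tailint a \<zeta> \<longlongrightarrow> L1) (at_right 0)" and L2: "(tailint a \<eta> \<longlongrightarrow> L2) (at_right 0)"
    using D_tlim assms by metis
  have "((\<lambda>t. c * tailint a \<zeta> t + tailint a \<eta> t) \<longlongrightarrow> c * L1 + L2) (at_right 0)"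
    by (intro tendsto_intros L1 L2)
  moreover have "eventually (\<lambda>t. c * tailint a \<zeta> t + tailint a \<eta> t = tailint a (\<lambda>t. c * \<zeta> t + \<eta> t) t) (at_right 0)"
    using eventually_at_right_less[of "0::real"] by eventually_elim (simp add: tailint_lin[OF assms])
  ultimately have "(tailint a (\<lambda>t. c * \<zeta> t + \<eta> t) \<longlongrightarrow> c * L1 + L2) (at_right 0)"
    by (rule Lim_transform_eventually)
  moreover have "(\<lambda>t. c * (t ^ a * \<zeta> t) + t ^ a * \<eta> t) = (\<lambda>t. t ^ a * (c * \<zeta> t + \<eta> t))"
    by (auto simp: algebra_simps)
  ultimately show ?thesis using l assms
    unfolding Dspace_def by (auto intro!: continuous_intros)
qed

lemma bdd_pos:
  fixes g :: "real \<Rightarrow> real"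
  assumes cg: "continuous_on {0<..} g" and lim: "(g \<longlongrightarrow> L) (at_right 0)"
    and z: "\<And>t. t > R \<Longrightarrow> g t = 0"
  shows "\<exists>B. \<forall>t>0. \<bar>g t\<bar> \<le> B"
proof -
  have "eventually (\<lambda>t. dist (g t) L < 1) (at_right 0)"
    using lim by (rule tendstoD) simp
  then obtain d where d0: "d > 0" and d: "\<forall>y>0. y < d \<longrightarrow> dist (g y) L < 1"
    unfolding eventually_at_right_field by blast
  have cpt: "compact (g ` {d..R})"
    by (intro compact_continuous_image continuous_on_subset[OF cg] compact_Icc) (use d0 in auto)
  have "bounded (g ` {d..R})" by (rule compact_imp_bounded[OF cpt])
  then obtain B where B: "\<forall>x\<in>g ` {d..R}. norm x \<le> B" unfolding bounded_iff by blast
  show ?thesis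
  proof (intro exI allI impI)
    fix t :: real assume t: "t > 0"
    show "\<bar>g t\<bar> \<le> max (\<bar>L\<bar> + 1) (max B 0)"
    proof (cases "t < d")
      case True
      then have "dist (g t) L < 1" using d t by blast
      then show ?thesis by (simp add: dist_real_def)
    next
      case False
      show ?thesis
      proof (cases "t > R")
        case True then show ?thesis using z by simp
      next
        case False2: False
        have "t \<in> {d..R}" using False False2 by simp
        then have "norm (g t) \<le> B" using B by blast
        then show ?thesis by simp
      qed
    qed
  qed
qed

lemma Rmap_lim:
  assumes "\<zeta> \<in> Dspace a R"
  shows "(Rmap a \<zeta> \<longlongrightarrow> Rext a \<zeta> 0) (at_right 0)"
proof -
  obtain L where L: "(tailint a \<zeta> \<longlongrightarrow> L) (at_right 0)" using D_tlim assms by metis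
  have "((\<lambda>t. t ^ a * \<zeta> t + real a * tailint a \<zeta> t) \<longlongrightarrow> 0 + real a * L) (at_right 0)"
    by (intro tendsto_intros D_lim[OF assms] L)
  moreover have "(\<lambda>t. t ^ a * \<zeta> t + real a * tailint a \<zeta> t) = Rmap a \<zeta>"
    by (auto simp: Rmap_def fun_eq_iff mult.commute)
  ultimately have *: "(Rmap a \<zeta> \<longlongrightarrow> real a * L) (at_right 0)" by simp
  then have "Rext a \<zeta> 0 = real a * L"
    unfolding Rext_def by (simp add: tendsto_Lim trivial_limit_at_right_real)
  with * show ?thesis by simp
qed

lemma Rmap_cont:
  assumes "\<zeta> \<in> Dspace a R" "t > 0"
  shows "isCont (Rmap a \<zeta>) t"
proof -
  have "\<forall>x\<in>{0<..}. isCont \<zeta> x"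
    using D_cont[OF assms(1)] continuous_on_eq_continuous_at[OF open_greaterThan] by blast
  then have "isCont \<zeta> t" using assms(2) by simp
  moreover have "isCont (tailint a \<zeta>) t" using tailint_deriv[OF assms] DERIV_isCont by blast
  ultimately show ?thesis unfolding Rmap_def[abs_def] by (intro continuous_intros)
qed

lemma Rext_Cc:
  assumes "\<zeta> \<in> Dspace a R" and R0: "R \<ge> 0"
  shows "Rext a \<zeta> \<in> Ccspace R"
proof -
  have "continuous (at x within {0..}) (Rext a \<zeta>)" if x: "x \<ge> 0" for x
  proof (cases "x = 0")
    case True
    have "eventually (\<lambda>t. Rmap a \<zeta> t = Rext a \<zeta> t) (at_right 0)"
      using eventually_at_right_less[of "0::real"] by eventually_elim (simp add: Rext_def)
    then have "(Rext a \<zeta> \<longlongrightarrow> Rext a \<zeta> 0) (at_right 0)"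
      using Rmap_lim[OF assms(1)] Lim_transform_eventually by blast
    then show ?thesis using True by (simp add: continuous_within at_within_Ici_at_right)
  next
    case False
    then have x0: "x > 0" using x by auto
    have "eventually (\<lambda>t. Rmap a \<zeta> t = Rext a \<zeta> t) (nhds x)"
    proof -
      have "eventually (\<lambda>t. t \<in> {0<..}) (nhds x)"
        by (rule eventually_nhds_in_open) (use x0 in auto)
      then show ?thesis by eventually_elim (auto simp: Rext_def)
    qed
    then have "isCont (Rext a \<zeta>) x" using Rmap_cont[OF assms(1) x0] isCont_cong by blast
    then show ?thesis by (rule continuous_at_imp_continuous_within)
  qed
  then have "continuous_on {0..} (Rext a \<zeta>)"
    using continuous_on_eq_continuous_within by blast
  moreover have "Rext a \<zeta> t = 0" if "t > R" for t
    using that R0 tailint_big[OF assms(1) that] D_big[OF assms(1) that]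
    by (auto simp: Rext_def Rmap_def)
  ultimately show ?thesis unfolding Ccspace_def by (auto simp: Rext_def)
qed

lemma Rext_lin:
  assumes "\<zeta> \<in> Dspace a R" "\<eta> \<in> Dspace a R"
  shows "Rext a (\<lambda>t. c * \<zeta> t + \<eta> t) = (\<lambda>t. c * Rext a \<zeta> t + Rext a \<eta> t)"
proof
  fix t :: real
  have pos: "Rmap a (\<lambda>t. c * \<zeta> t + \<eta> t) s = c * Rmap a \<zeta> s + Rmap a \<eta> s" if "s > 0" for s
    using tailint_lin[OF assms that, of c] by (simp add: Rmap_def algebra_simps)
  show "Rext a (\<lambda>t. c * \<zeta> t + \<eta> t) t = c * Rext a \<zeta> t + Rext a \<eta> t"
  proof (cases "t > 0")
    case True then show ?thesis by (simp add: Rext_def pos)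
  next
    case False
    show ?thesis
    proof (cases "t = 0")
      case True
      have "((\<lambda>s. c * Rmap a \<zeta> s + Rmap a \<eta> s) \<longlongrightarrow> c * Rext a \<zeta> 0 + Rext a \<eta> 0) (at_right 0)"
        by (intro tendsto_intros Rmap_lim[OF assms(1)] Rmap_lim[OF assms(2)])
      moreover have "eventually (\<lambda>s. c * Rmap a \<zeta> s + Rmap a \<eta> s = Rmap a (\<lambda>t. c * \<zeta> t + \<eta> t) s) (at_right 0)"
        using eventually_at_right_less[of "0::real"] by eventually_elim (simp add: pos)
      ultimately have "(Rmap a (\<lambda>t. c * \<zeta> t + \<eta> t) \<longlongrightarrow> c * Rext a \<zeta> 0 + Rext a \<eta> 0) (at_right 0)"
        by (rule Lim_transform_eventually)
      then show ?thesis using True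
        by (simp add: Rext_def tendsto_Lim trivial_limit_at_right_real)
    next
      case False2: False
      with False show ?thesis by (simp add: Rext_def)
    qed
  qed
qed


lemma tailint_deriv_gen:
  assumes "continuous_on {0<..} \<zeta>" "\<And>t. t > R \<Longrightarrow> \<zeta> t = 0" "t > 0"
  shows "(tailint a \<zeta> has_real_derivative - (\<zeta> t * t ^ (a - 1))) (at t)"
  unfolding tailint_def[abs_def]
  by (rule tail_deriv[of "\<lambda>r. \<zeta> r * r ^ (a - 1)" R t]) (use assms in \<open>auto intro!: continuous_intros\<close>)

lemma tailint_big_gen: "(\<And>t. t > R \<Longrightarrow> \<zeta> t = 0) \<Longrightarrow> t > R \<Longrightarrow> tailint a \<zeta> t = 0"
  unfolding tailint_def using tail_zero[of R "\<lambda>r. \<zeta> r * r ^ (a - 1)" t] by auto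

lemma Rmap_zero:
  assumes D: "\<zeta> \<in> Dspace a R" and z: "\<And>t. t > 0 \<Longrightarrow> Rmap a \<zeta> t = 0"
  shows "\<zeta> t = 0"
proof -
  define H where "H t = tailint a \<zeta> t / t ^ a" for t
  have dH: "(H has_real_derivative 0) (at s)" if s: "s > 0" for s
  proof -
    have "(H has_real_derivative ((- (\<zeta> s * s^(a-1))) * s^a - tailint a \<zeta> s * (real a * s^(a - Suc 0))) / (s^a * s^a)) (at s)"
      unfolding H_def[abs_def] by (rule DERIV_divide[OF tailint_deriv[OF D s] DERIV_pow]) (use s in simp)
    moreover have "(- (\<zeta> s * s^(a-1))) * s^a - tailint a \<zeta> s * (real a * s^(a - Suc 0)) = - (s^(a-1) * Rmap a \<zeta> s)"
      by (simp add: Rmap_def algebra_simps)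
    ultimately show ?thesis using z[OF s] by simp
  qed
  define s0 where "s0 = max R 0 + 1"
  have "tailint a \<zeta> s0 = 0" using tailint_big[OF D, of s0] by (simp add: s0_def)
  then have Hs0: "H s0 = 0" unfolding H_def by simp
  show "\<zeta> t = 0"
  proof (cases "t > 0")
    case True
    have "H t = H s0" by (rule zero_deriv_const[OF dH]) (use True in \<open>auto simp: s0_def\<close>)
    then have "tailint a \<zeta> t / t ^ a = 0" using Hs0 by (simp add: H_def)
    then have "tailint a \<zeta> t = 0" using True by simp
    then show ?thesis using z[OF True] True by (simp add: Rmap_def)
  next
    case False then show ?thesis using D_neg[OF D] by simp
  qed
qed

lemma Rext_inj: "inj_on (Rext a) (Dspace a R)"
proof (rule inj_onI)
  fix \<zeta> \<eta> assume D: "\<zeta> \<in> Dspace a R" "\<eta> \<in> Dspace a R" and e: "Rext a \<zeta> = Rext a \<eta>"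
  define d where "d = (\<lambda>t. (-1) * \<zeta> t + \<eta> t)"
  have dD: "d \<in> Dspace a R" unfolding d_def by (rule D_lincomb[OF D])
  have "Rext a d = (\<lambda>t. (-1) * Rext a \<zeta> t + Rext a \<eta> t)" unfolding d_def by (rule Rext_lin[OF D])
  then have "Rext a d t = 0" for t using e by simp
  then have "Rmap a d t = 0" if "t > 0" for t using that by (metis Rext_def)
  then have "d t = 0" for t by (rule Rmap_zero[OF dD])
  then have "\<zeta> t = \<eta> t" for t unfolding d_def by (metis add.commute diff_add_cancel diff_minus_eq_add mult_minus1 add_0 eq_neg_iff_add_eq_0 neg_equal_iff_equal)
  then show "\<zeta> = \<eta>" by auto
qed


lemma r1: "(t::real) > 0 \<Longrightarrow> a = Suc m \<Longrightarrow> real a * t ^ (a - Suc 0) * inverse ((t ^ a) ^ Suc (Suc 0)) = real a / t ^ (a+1)"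
  by (simp add: field_simps power2_eq_square)
lemma r2: "(t::real) > 0 \<Longrightarrow> a = Suc m \<Longrightarrow> - (x / t ^ (a + 1)) / - (real a / t ^ (a+1)) = x / real a"
  by (simp add: field_simps)
lemma r4: "(t::real) > 0 \<Longrightarrow> a = Suc m \<Longrightarrow> - ((f / t ^ a - real a * P) * t ^ (a - 1)) -
        (real a * t ^ (a - Suc 0) * P + (- (f / t ^ (a + 1))) * t ^ a) = 0"
  by (simp add: field_simps)
lemma r5: "(t::real) > 0 \<Longrightarrow> f - real a * (t ^ a * P) = t ^ a * (f / t ^ a - real a * P)"
  by (simp add: field_simps)
lemma r6: "(t::real) > 0 \<Longrightarrow> (f / t ^ a - real a * P) * t ^ a + real a * (t ^ a * P) = f"
  by (simp add: field_simps)

lemma C_cont: "f \<in> Ccspace R \<Longrightarrow> continuous_on {0..} f"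
  and C_neg: "f \<in> Ccspace R \<Longrightarrow> t < 0 \<Longrightarrow> f t = 0"
  and C_big: "f \<in> Ccspace R \<Longrightarrow> t > R \<Longrightarrow> f t = 0"
  by (auto simp: Ccspace_def)

definition Ptail :: "nat \<Rightarrow> (real \<Rightarrow> real) \<Rightarrow> real \<Rightarrow> real" where
  "Ptail a f t = integral {t..} (\<lambda>s. f s / s ^ (a + 1))"

definition Rinv :: "nat \<Rightarrow> (real \<Rightarrow> real) \<Rightarrow> real \<Rightarrow> real" where
  "Rinv a f t = (if t > 0 then f t / t ^ a - real a * Ptail a f t else 0)"

lemma P_integrand_cont: "f \<in> Ccspace R \<Longrightarrow> continuous_on {0<..} (\<lambda>s. f s / s ^ (a + 1))"
  by (intro continuous_intros continuous_on_subset[OF C_cont]) auto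

lemma P_deriv:
  assumes "f \<in> Ccspace R" "t > 0"
  shows "(Ptail a f has_real_derivative - (f t / t ^ (a + 1))) (at t)"
  unfolding Ptail_def[abs_def]
  by (rule tail_deriv[of _ R]) (use assms P_integrand_cont C_big in auto)

lemma P_big: "f \<in> Ccspace R \<Longrightarrow> t > R \<Longrightarrow> Ptail a f t = 0"
  unfolding Ptail_def using tail_zero[of R "\<lambda>s. f s / s ^ (a + 1)" t] C_big by force

lemma P_integrable:
  assumes "f \<in> Ccspace R" "t > 0"
  shows "(\<lambda>s. f s / s ^ (a + 1)) integrable_on {t..}"
  using tail_eq(2)[of "\<lambda>s. f s / s ^ (a + 1)" R t "max t R"] P_integrand_cont[OF assms(1)]
    C_big[OF assms(1)] assms(2) by auto

lemma P_cont: "f \<in> Ccspace R \<Longrightarrow> continuous_on {0<..} (Ptail a f)"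
  by (intro continuous_at_imp_continuous_on ballI DERIV_isCont[OF P_deriv]) auto

lemma C_right: "f \<in> Ccspace R \<Longrightarrow> (f \<longlongrightarrow> f 0) (at_right 0)"
proof -
  assume f: "f \<in> Ccspace R"
  have "\<forall>x\<in>{0..}. (f \<longlongrightarrow> f x) (at x within {0..})"
    using C_cont[OF f] continuous_on_eq_continuous_within[of "{0..}" f] by (simp add: continuous_within)
  then have "(f \<longlongrightarrow> f 0) (at 0 within {0..})" by simp
  then show ?thesis by (simp only: at_within_Ici_at_right)
qed

lemma P_lim:
  assumes f: "f \<in> Ccspace R" and a: "a \<ge> 1"
  shows "((\<lambda>t. t ^ a * Ptail a f t) \<longlongrightarrow> f 0 / real a) (at_right 0)"
proof -
  have "((\<lambda>t. t ^ a) \<longlongrightarrow> 0 ^ a) (at_right (0::real))" by (intro tendsto_intros)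
  then have t0: "((\<lambda>t. t ^ a) \<longlongrightarrow> 0) (at_right (0::real))"
    by (rule tendsto_cong_limit) (use a in \<open>cases a, auto\<close>)
  have ev: "eventually (\<lambda>t::real. 0 < t ^ a) (at_right 0)"
    using eventually_at_right_less[of "0::real"] by eventually_elim simp
  have G: "LIM t at_right 0. inverse ((t::real) ^ a) :> at_top"
    by (rule filterlim_inverse_at_top[OF t0 ev])
  have "((\<lambda>t. Ptail a f t / inverse (t ^ a)) \<longlongrightarrow> f 0 / real a) (at_right 0)"
  proof (rule lhopital_right_at_top[OF G, where f' = "\<lambda>t. - (f t / t ^ (a + 1))"
        and g' = "\<lambda>t. - (real a * t ^ (a - Suc 0) * inverse ((t ^ a) ^ Suc (Suc 0)))"])
    show "\<forall>\<^sub>F t in at_right 0. - (real a * t ^ (a - Suc 0) * inverse ((t ^ a) ^ Suc (Suc 0))) \<noteq> 0"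
      using eventually_at_right_less[of "0::real"] by eventually_elim (use a in auto)
    show "\<forall>\<^sub>F t in at_right 0. (Ptail a f has_real_derivative - (f t / t ^ (a + 1))) (at t)"
      using eventually_at_right_less[of "0::real"] by eventually_elim (rule P_deriv[OF f])
    show "\<forall>\<^sub>F t in at_right 0. ((\<lambda>t. inverse (t ^ a)) has_real_derivative
              - (real a * t ^ (a - Suc 0) * inverse ((t ^ a) ^ Suc (Suc 0)))) (at t)"
      using eventually_at_right_less[of "0::real"]
      by eventually_elim (rule DERIV_inverse_fun[OF DERIV_pow], simp)
    obtain m where m: "a = Suc m" using a by (cases a) auto
    have "eventually (\<lambda>t. f t / real a = - (f t / t ^ (a + 1)) /
            - (real a * t ^ (a - Suc 0) * inverse ((t ^ a) ^ Suc (Suc 0)))) (at_right 0)"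
      using eventually_at_right_less[of "0::real"]
    proof eventually_elim
      case (elim t)
      show ?case by (subst r1[OF elim m], subst r2[OF elim m], rule refl)
    qed
    moreover have "((\<lambda>t. f t / real a) \<longlongrightarrow> f 0 / real a) (at_right 0)"
      by (intro tendsto_intros C_right[OF f]) (use a in simp)
    ultimately show "((\<lambda>t. - (f t / t ^ (a + 1)) /
            - (real a * t ^ (a - Suc 0) * inverse ((t ^ a) ^ Suc (Suc 0)))) \<longlongrightarrow> f 0 / real a) (at_right 0)"
      by (rule Lim_transform_eventually[rotated])
  qed
  moreover have "(\<lambda>t. Ptail a f t / inverse (t ^ a)) = (\<lambda>t. t ^ a * Ptail a f t)"
    by (rule ext) (simp add: divide_inverse mult_ac)
  ultimately show ?thesis by simp
qed

lemma Rinv_cont: "f \<in> Ccspace R \<Longrightarrow> continuous_on {0<..} (Rinv a f)"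
proof -
  assume f: "f \<in> Ccspace R"
  have "continuous_on {0<..} (\<lambda>t. f t / t ^ a - real a * Ptail a f t)"
    by (intro continuous_intros continuous_on_subset[OF C_cont[OF f]] P_cont[OF f]) auto
  then show ?thesis by (rule continuous_on_eq) (auto simp: Rinv_def)
qed

lemma Rinv_big: "f \<in> Ccspace R \<Longrightarrow> t > R \<Longrightarrow> Rinv a f t = 0"
  by (simp add: Rinv_def C_big P_big)

lemma tail_Rinv:
  assumes f: "f \<in> Ccspace R" and a: "a \<ge> 1" and t: "t > 0"
  shows "tailint a (Rinv a f) t = t ^ a * Ptail a f t"
proof -
  define K where "K s = tailint a (Rinv a f) s - s ^ a * Ptail a f s" for s
  obtain m where m: "a = Suc m" using a by (cases a) auto
  have dK: "(K has_real_derivative 0) (at s)" if s: "s > 0" for s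
  proof -
    have "(K has_real_derivative (- (Rinv a f s * s ^ (a - 1)) -
        (real a * s ^ (a - Suc 0) * Ptail a f s + (- (f s / s ^ (a + 1))) * s ^ a))) (at s)"
      unfolding K_def[abs_def]
      by (intro DERIV_diff DERIV_mult tailint_deriv_gen[OF Rinv_cont[OF f] Rinv_big[OF f] s]
          DERIV_pow P_deriv[OF f s])
    moreover have "- (Rinv a f s * s ^ (a - 1)) -
        (real a * s ^ (a - Suc 0) * Ptail a f s + (- (f s / s ^ (a + 1))) * s ^ a) = 0"
      using r4[OF s m, of "f s" "Ptail a f s"] s by (simp add: Rinv_def)
    ultimately show ?thesis by simp
  qed
  define s0 where "s0 = max R 0 + 1"
  have "K s0 = 0" unfolding K_def
    using tailint_big_gen[of R "Rinv a f" s0] Rinv_big[OF f] P_big[OF f, of s0] by (simp add: s0_def)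
  moreover have "K t = K s0" by (rule zero_deriv_const[OF dK]) (use t in \<open>auto simp: s0_def\<close>)
  ultimately show ?thesis by (simp add: K_def)
qed

lemma Rinv_D:
  assumes f: "f \<in> Ccspace R" and a: "a \<ge> 1"
  shows "Rinv a f \<in> Dspace a R"
proof -
  have L: "((\<lambda>t. f t - real a * (t ^ a * Ptail a f t)) \<longlongrightarrow> f 0 - real a * (f 0 / real a)) (at_right 0)"
    by (intro tendsto_intros C_right[OF f] P_lim[OF f a])
  have E: "f 0 - real a * (f 0 / real a) = 0" using a by simp
  have t1: "((\<lambda>t. f t - real a * (t ^ a * Ptail a f t)) \<longlongrightarrow> 0) (at_right 0)"
    using L by (simp only: E)
  have ev: "eventually (\<lambda>t. f t - real a * (t ^ a * Ptail a f t) = t ^ a * Rinv a f t) (at_right 0)"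
    using eventually_at_right_less[of "0::real"] by eventually_elim (simp add: Rinv_def r5)
  have l1: "((\<lambda>t. t ^ a * Rinv a f t) \<longlongrightarrow> 0) (at_right 0)"
    by (rule Lim_transform_eventually[OF t1 ev])
  have "eventually (\<lambda>t. t ^ a * Ptail a f t = tailint a (Rinv a f) t) (at_right 0)"
    using eventually_at_right_less[of "0::real"] by eventually_elim (simp add: tail_Rinv[OF f a])
  then have l2: "(tailint a (Rinv a f) \<longlongrightarrow> f 0 / real a) (at_right 0)"
    by (rule Lim_transform_eventually[OF P_lim[OF f a]])
  show ?thesis unfolding Dspace_def
    using Rinv_cont[OF f] Rinv_big[OF f] l1 l2 by (auto simp: Rinv_def)
qed

lemma Rext_Rinv:
  assumes f: "f \<in> Ccspace R" and a: "a \<ge> 1"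
  shows "Rext a (Rinv a f) = f"
proof
  fix t :: real
  have pos: "Rmap a (Rinv a f) s = f s" if s: "s > 0" for s
    using s by (simp add: Rmap_def tail_Rinv[OF f a s] Rinv_def r6)
  show "Rext a (Rinv a f) t = f t"
  proof (cases "t > 0")
    case True then show ?thesis by (simp add: Rext_def pos)
  next
    case False
    show ?thesis
    proof (cases "t = 0")
      case True
      have "eventually (\<lambda>s. f s = Rmap a (Rinv a f) s) (at_right 0)"
        using eventually_at_right_less[of "0::real"] by eventually_elim (simp add: pos)
      then have "(Rmap a (Rinv a f) \<longlongrightarrow> f 0) (at_right 0)"
        by (rule Lim_transform_eventually[OF C_right[OF f]])
      then show ?thesis using True
        by (simp add: Rext_def tendsto_Lim trivial_limit_at_right_real)
    next
      case False2: False
      with False show ?thesis using C_neg[OF f] by (simp add: Rext_def)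
    qed
  qed
qed


lemma D_sup1:
  assumes D: "\<zeta> \<in> Dspace a R"
  shows "bdd_above ((\<lambda>t. \<bar>t ^ a * \<zeta> t\<bar>) ` {0<..})"
proof -
  have c: "continuous_on {0<..} (\<lambda>t. t ^ a * \<zeta> t)" by (intro continuous_intros D_cont[OF D])
  have z: "t ^ a * \<zeta> t = 0" if "t > R" for t using D_big[OF D that] by simp
  obtain B where "\<forall>t>0. \<bar>t ^ a * \<zeta> t\<bar> \<le> B"
    using bdd_pos[OF c D_lim[OF D] z] by blast
  then show ?thesis by (intro bdd_aboveI2[of _ _ B]) auto
qed

lemma D_sup2:
  assumes D: "\<zeta> \<in> Dspace a R"
  shows "bdd_above ((\<lambda>t. \<bar>tailint a \<zeta> t\<bar>) ` {0<..})"
proof -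
  obtain L where L: "(tailint a \<zeta> \<longlongrightarrow> L) (at_right 0)" using D_tlim[OF D] by blast
  obtain B where "\<forall>t>0. \<bar>tailint a \<zeta> t\<bar> \<le> B"
    using bdd_pos[OF tailint_cont[OF D] L tailint_big[OF D]] by blast
  then show ?thesis by (intro bdd_aboveI2[of _ _ B]) auto
qed

lemma Rext_bound:
  assumes D: "\<zeta> \<in> Dspace a R" and t: "t \<ge> 0"
  shows "\<bar>Rext a \<zeta> t\<bar> \<le> (1 + real a) * Dnorm a \<zeta>"
proof -
  define S1 where "S1 = (SUP t\<in>{0<..}. \<bar>t ^ a * \<zeta> t\<bar>)"
  define S2 where "S2 = (SUP t\<in>{0<..}. \<bar>tailint a \<zeta> t\<bar>)"
  have u1: "\<bar>s ^ a * \<zeta> s\<bar> \<le> S1" if "s > 0" for s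
    unfolding S1_def by (rule cSUP_upper[OF _ D_sup1[OF D]]) (use that in auto)
  have u2: "\<bar>tailint a \<zeta> s\<bar> \<le> S2" if "s > 0" for s
    unfolding S2_def by (rule cSUP_upper[OF _ D_sup2[OF D]]) (use that in auto)
  have S1: "S1 \<ge> 0" using u1[of 1] by linarith
  have S2: "S2 \<ge> 0" using u2[of 1] by linarith
  have "real a * S1 \<ge> 0" using S1 by simp
  moreover have "(1 + real a) * (S1 + S2) = S1 + S2 + real a * S1 + real a * S2"
    by (simp add: algebra_simps)
  ultimately have key: "S1 + real a * S2 \<le> (1 + real a) * Dnorm a \<zeta>"
    using S2 unfolding Dnorm_def S1_def[symmetric] S2_def[symmetric] by linarith
  have pos: "\<bar>Rmap a \<zeta> s\<bar> \<le> (1 + real a) * Dnorm a \<zeta>" if s: "s > 0" for s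
  proof -
    have "\<bar>Rmap a \<zeta> s\<bar> \<le> \<bar>s ^ a * \<zeta> s\<bar> + real a * \<bar>tailint a \<zeta> s\<bar>"
      unfolding Rmap_def by (simp add: abs_mult mult.commute abs_triangle_ineq[THEN order_trans])
    also have "\<dots> \<le> S1 + real a * S2"
      using u1[OF s] u2[OF s] by (intro add_mono mult_left_mono) auto
    finally show ?thesis using key by linarith
  qed
  show ?thesis
  proof (cases "t > 0")
    case True then show ?thesis using pos[OF True] by (simp add: Rext_def)
  next
    case False
    then have t0: "t = 0" using t by simp
    have "\<bar>Rext a \<zeta> 0\<bar> \<le> (1 + real a) * Dnorm a \<zeta>"
    proof (rule tendsto_upperbound[OF tendsto_rabs[OF Rmap_lim[OF D]]])
      show "\<forall>\<^sub>F x in at_right 0. \<bar>Rmap a \<zeta> x\<bar> \<le> (1 + real a) * Dnorm a \<zeta>"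
        using eventually_at_right_less[of "0::real"] by eventually_elim (rule pos)
    qed (simp add: trivial_limit_at_right_real)
    then show ?thesis using t0 by simp
  qed
qed

lemma Cc_bdd:
  assumes h: "h \<in> Ccspace R"
  shows "bdd_above ((\<lambda>t. \<bar>h t\<bar>) ` {0..})"
proof -
  have cpt: "compact (h ` {0..R})"
    by (intro compact_continuous_image continuous_on_subset[OF C_cont[OF h]] compact_Icc) auto
  have "bounded (h ` {0..R})" by (rule compact_imp_bounded[OF cpt])
  then obtain B where B: "\<forall>x\<in>h ` {0..R}. norm x \<le> B" unfolding bounded_iff by blast
  have "\<bar>h t\<bar> \<le> max B 0" if t: "t \<in> {0..}" for t
  proof (cases "t > R")
    case True then show ?thesis using C_big[OF h] by simp
  next
    case False
    then have "t \<in> {0..R}" using t by simp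
    then have "norm (h t) \<le> B" using B by blast
    then show ?thesis by simp
  qed
  then show ?thesis by (rule bdd_aboveI2)
qed

lemma Cc_diff: "g \<in> Ccspace R \<Longrightarrow> f \<in> Ccspace R \<Longrightarrow> (\<lambda>t. g t - f t) \<in> Ccspace R"
  by (auto simp: Ccspace_def intro!: continuous_intros)

lemma Rinv_diff:
  assumes g: "g \<in> Ccspace R" and f: "f \<in> Ccspace R"
  shows "Rinv a g t - Rinv a f t = Rinv a (\<lambda>t. g t - f t) t"
proof (cases "t > 0")
  case True
  have "(\<lambda>s. (g s - f s) / s ^ (a + 1)) = (\<lambda>s. g s / s ^ (a + 1) - f s / s ^ (a + 1))"
    by (auto simp: diff_divide_distrib)
  then have Pd: "Ptail a (\<lambda>t. g t - f t) t = Ptail a g t - Ptail a f t"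
    unfolding Ptail_def using integral_diff[OF P_integrable[OF g True] P_integrable[OF f True]] by simp
  show ?thesis using True by (simp add: Rinv_def Pd diff_divide_distrib right_diff_distrib)
qed (simp add: Rinv_def)

lemma P_bound:
  assumes h: "h \<in> Ccspace R" and a: "a \<ge> 1" and M: "\<And>t. t \<ge> 0 \<Longrightarrow> \<bar>h t\<bar> \<le> M" and t: "t > 0"
  shows "\<bar>t ^ a * Ptail a h t\<bar> \<le> M / real a"
proof -
  obtain m where m: "a = Suc m" using a by (cases a) auto
  have M0: "M \<ge> 0" using M[of 0] by simp
  define c where "c = M / real a"
  define b where "b = max R t + 1"
  have tb: "t \<le> b" and Rb: "b > R" and b0: "b > 0" using t by (auto simp: b_def)
  have dinv: "((\<lambda>s. inverse (s ^ a)) has_real_derivative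
      - (real a * s ^ (a - Suc 0) * inverse ((s ^ a) ^ Suc (Suc 0)))) (at s)" if "s > 0" for s
    by (rule DERIV_inverse_fun[OF DERIV_pow]) (use that in simp)
  have ceq: "c * (real a * s ^ (a - Suc 0) * inverse ((s ^ a) ^ Suc (Suc 0))) = M / s ^ (a + 1)"
    if "s > 0" for s
  proof -
    have "c * (real a * s ^ (a - Suc 0) * inverse ((s ^ a) ^ Suc (Suc 0))) = c * (real a / s ^ (a + 1))"
      by (simp only: r1[OF that m])
    also have "\<dots> = M / s ^ (a + 1)" using m by (simp add: c_def)
    finally show ?thesis .
  qed
  have up: "Ptail a h t - c * inverse (t ^ a) \<le> Ptail a h b - c * inverse (b ^ a)"
  proof (rule DERIV_nonneg_imp_nondecreasing[OF tb])
    fix s assume s: "t \<le> s" "s \<le> b"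
    then have s0: "s > 0" using t by simp
    have "((\<lambda>s. Ptail a h s - c * inverse (s ^ a)) has_real_derivative
       - (h s / s ^ (a + 1)) - c * (- (real a * s ^ (a - Suc 0) * inverse ((s ^ a) ^ Suc (Suc 0))))) (at s)"
      by (intro DERIV_diff DERIV_cmult P_deriv[OF h s0] dinv s0)
    moreover have "- (h s / s ^ (a + 1)) - c * (- (real a * s ^ (a - Suc 0) * inverse ((s ^ a) ^ Suc (Suc 0))))
        = (M - h s) / s ^ (a + 1)"
      using ceq[OF s0] by (simp add: diff_divide_distrib)
    moreover have "(M - h s) / s ^ (a + 1) \<ge> 0" using M[of s] s0 by simp
    ultimately show "\<exists>y. ((\<lambda>s. Ptail a h s - c * inverse (s ^ a)) has_real_derivative y) (at s) \<and> 0 \<le> y"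
      by metis
  qed
  have lo: "- Ptail a h t - c * inverse (t ^ a) \<le> - Ptail a h b - c * inverse (b ^ a)"
  proof (rule DERIV_nonneg_imp_nondecreasing[OF tb])
    fix s assume s: "t \<le> s" "s \<le> b"
    then have s0: "s > 0" using t by simp
    have "((\<lambda>s. - Ptail a h s - c * inverse (s ^ a)) has_real_derivative
       - (- (h s / s ^ (a + 1))) - c * (- (real a * s ^ (a - Suc 0) * inverse ((s ^ a) ^ Suc (Suc 0))))) (at s)"
      by (intro DERIV_diff DERIV_cmult DERIV_minus P_deriv[OF h s0] dinv s0)
    moreover have "- (- (h s / s ^ (a + 1))) - c * (- (real a * s ^ (a - Suc 0) * inverse ((s ^ a) ^ Suc (Suc 0))))
        = (M + h s) / s ^ (a + 1)"
      using ceq[OF s0] by (simp add: add_divide_distrib)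
    moreover have "(M + h s) / s ^ (a + 1) \<ge> 0" using M[of s] s0 by simp
    ultimately show "\<exists>y. ((\<lambda>s. - Ptail a h s - c * inverse (s ^ a)) has_real_derivative y) (at s) \<and> 0 \<le> y"
      by metis
  qed
  have Pb: "Ptail a h b = 0" by (rule P_big[OF h Rb])
  have cb: "c * inverse (b ^ a) \<ge> 0" using M0 b0 by (simp add: c_def)
  have "\<bar>Ptail a h t\<bar> \<le> c * inverse (t ^ a)" using up lo Pb cb by linarith
  then have le: "t ^ a * \<bar>Ptail a h t\<bar> \<le> t ^ a * (c * inverse (t ^ a))"
    using t by (intro mult_left_mono) auto
  have e: "t ^ a * (c * inverse (t ^ a)) = c" using t by (simp add: field_simps)
  have ab: "\<bar>t ^ a * Ptail a h t\<bar> = t ^ a * \<bar>Ptail a h t\<bar>" using t by (simp add: abs_mult)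
  have "\<bar>t ^ a * Ptail a h t\<bar> \<le> c" using le e ab by linarith
  then show ?thesis by (simp add: c_def)
qed

lemma Rinv_bound:
  assumes h: "h \<in> Ccspace R" and a: "a \<ge> 1" and M: "\<And>t. t \<ge> 0 \<Longrightarrow> \<bar>h t\<bar> \<le> M"
  shows "Dnorm a (Rinv a h) \<le> 3 * M"
proof -
  have M0: "M \<ge> 0" using M[of 0] by simp
  have Ma: "M / real a \<le> M"
  proof -
    have "M * 1 \<le> M * real a" using a M0 by (intro mult_left_mono) auto
    then show ?thesis using a by (simp add: divide_le_eq)
  qed
  have b1: "\<bar>t ^ a * Rinv a h t\<bar> \<le> 2 * M" if t: "t > 0" for t
  proof -
    have "t ^ a * Rinv a h t = h t - real a * (t ^ a * Ptail a h t)"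
      using r5[OF t, of "h t" a "Ptail a h t"] t by (simp add: Rinv_def)
    also have "\<bar>\<dots>\<bar> \<le> \<bar>h t\<bar> + real a * \<bar>t ^ a * Ptail a h t\<bar>"
      using abs_triangle_ineq4[of "h t" "real a * (t ^ a * Ptail a h t)"] by (simp add: abs_mult)
    also have "\<dots> \<le> M + real a * (M / real a)"
      using M[of t] t P_bound[OF h a M t] by (intro add_mono mult_left_mono) auto
    also have "\<dots> = 2 * M" using a by simp
    finally show ?thesis .
  qed
  have b2: "\<bar>tailint a (Rinv a h) t\<bar> \<le> M" if t: "t > 0" for t
    using tail_Rinv[OF h a t] P_bound[OF h a M t] Ma by simp
  have "(SUP t\<in>{0<..}. \<bar>t ^ a * Rinv a h t\<bar>) \<le> 2 * M"
    by (rule cSUP_least) (use b1 in auto)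
  moreover have "(SUP t\<in>{0<..}. \<bar>tailint a (Rinv a h) t\<bar>) \<le> M"
    by (rule cSUP_least) (use b2 in auto)
  ultimately show ?thesis unfolding Dnorm_def by linarith
qed


theorem lemma3p5:
  fixes a :: nat and R :: real
  assumes "a \<ge> 1" and "R > 0"
  shows "(\<forall>\<zeta>\<in>Dspace a R. (Rmap a \<zeta> \<longlongrightarrow> Rext a \<zeta> 0) (at_right 0)
            \<and> Rext a \<zeta> \<in> Ccspace R)
       \<and> (\<forall>\<zeta>\<in>Dspace a R. \<forall>\<eta>\<in>Dspace a R. \<forall>c::real.
            Rext a (\<lambda>t. c * \<zeta> t + \<eta> t) = (\<lambda>t. c * Rext a \<zeta> t + Rext a \<eta> t))
       \<and> bij_betw (Rext a) (Dspace a R) (Ccspace R)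
       \<and> (\<forall>\<zeta>\<in>Dspace a R. \<forall>\<epsilon>>0. \<exists>\<delta>>0. \<forall>\<eta>\<in>Dspace a R.
            Dnorm a (\<lambda>t. \<eta> t - \<zeta> t) < \<delta> \<longrightarrow>
            supnorm (\<lambda>t. Rext a \<eta> t - Rext a \<zeta> t) < \<epsilon>)
       \<and> (\<forall>f\<in>Ccspace R. \<forall>\<epsilon>>0. \<exists>\<delta>>0. \<forall>g\<in>Ccspace R.
            supnorm (\<lambda>t. g t - f t) < \<delta> \<longrightarrow>
            Dnorm a (\<lambda>t. the_inv_into (Dspace a R) (Rext a) g t
                          - the_inv_into (Dspace a R) (Rext a) f t) < \<epsilon>)"
proof (intro conjI ballI allI impI)
  fix \<zeta> assume D: "\<zeta> \<in> Dspace a R"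
  show "(Rmap a \<zeta> \<longlongrightarrow> Rext a \<zeta> 0) (at_right 0)" by (rule Rmap_lim[OF D])
  show "Rext a \<zeta> \<in> Ccspace R" by (rule Rext_Cc[OF D less_imp_le[OF assms(2)]])
next
  fix \<zeta> \<eta> c assume "\<zeta> \<in> Dspace a R" "\<eta> \<in> Dspace a R"
  then show "Rext a (\<lambda>t. c * \<zeta> t + \<eta> t) = (\<lambda>t. c * Rext a \<zeta> t + Rext a \<eta> t)"
    by (rule Rext_lin)
next
  show "bij_betw (Rext a) (Dspace a R) (Ccspace R)"
    unfolding bij_betw_def
  proof (intro conjI Rext_inj equalityI subsetI)
    fix f assume "f \<in> Rext a ` Dspace a R"
    then show "f \<in> Ccspace R" using Rext_Cc[OF _ less_imp_le[OF assms(2)]] by blast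
  next
    fix f assume f: "f \<in> Ccspace R"
    show "f \<in> Rext a ` Dspace a R"
      using Rext_Rinv[OF f assms(1)] Rinv_D[OF f assms(1)] by (metis image_eqI)
  qed
next
  fix \<zeta> :: "real \<Rightarrow> real" and \<epsilon> :: real
  assume D: "\<zeta> \<in> Dspace a R" and e: "\<epsilon> > 0"
  show "\<exists>\<delta>>0. \<forall>\<eta>\<in>Dspace a R. Dnorm a (\<lambda>t. \<eta> t - \<zeta> t) < \<delta> \<longrightarrow>
            supnorm (\<lambda>t. Rext a \<eta> t - Rext a \<zeta> t) < \<epsilon>"
  proof (intro exI conjI ballI impI)
    show "\<epsilon> / (1 + real a) > 0" using e by simp
    fix \<eta> assume E: "\<eta> \<in> Dspace a R" and lt: "Dnorm a (\<lambda>t. \<eta> t - \<zeta> t) < \<epsilon> / (1 + real a)"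
    define d where "d = (\<lambda>t. (-1) * \<zeta> t + \<eta> t)"
    have dD: "d \<in> Dspace a R" unfolding d_def by (rule D_lincomb[OF D E])
    have dd: "d = (\<lambda>t. \<eta> t - \<zeta> t)" by (auto simp: d_def)
    have "Rext a d = (\<lambda>t. (-1) * Rext a \<zeta> t + Rext a \<eta> t)" unfolding d_def by (rule Rext_lin[OF D E])
    then have rd: "Rext a \<eta> t - Rext a \<zeta> t = Rext a d t" for t by simp
    have "supnorm (\<lambda>t. Rext a \<eta> t - Rext a \<zeta> t) \<le> (1 + real a) * Dnorm a d"
      unfolding supnorm_def rd by (rule cSUP_least) (use Rext_bound[OF dD] in auto)
    also have "\<dots> < (1 + real a) * (\<epsilon> / (1 + real a))"
      using lt dd by (intro mult_strict_left_mono) auto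
    also have "\<dots> = \<epsilon>" by simp
    finally show "supnorm (\<lambda>t. Rext a \<eta> t - Rext a \<zeta> t) < \<epsilon>" .
  qed
next
  fix f :: "real \<Rightarrow> real" and \<epsilon> :: real
  assume f: "f \<in> Ccspace R" and e: "\<epsilon> > 0"
  have inv: "the_inv_into (Dspace a R) (Rext a) g = Rinv a g" if "g \<in> Ccspace R" for g
    by (rule the_inv_into_f_eq[OF Rext_inj Rext_Rinv[OF that assms(1)] Rinv_D[OF that assms(1)]])
  show "\<exists>\<delta>>0. \<forall>g\<in>Ccspace R. supnorm (\<lambda>t. g t - f t) < \<delta> \<longrightarrow>
            Dnorm a (\<lambda>t. the_inv_into (Dspace a R) (Rext a) g t
                          - the_inv_into (Dspace a R) (Rext a) f t) < \<epsilon>"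
  proof (intro exI conjI ballI impI)
    show "\<epsilon> / 3 > 0" using e by simp
    fix g assume g: "g \<in> Ccspace R" and lt: "supnorm (\<lambda>t. g t - f t) < \<epsilon> / 3"
    have h: "(\<lambda>t. g t - f t) \<in> Ccspace R" by (rule Cc_diff[OF g f])
    have eq: "(\<lambda>t. the_inv_into (Dspace a R) (Rext a) g t - the_inv_into (Dspace a R) (Rext a) f t)
        = Rinv a (\<lambda>t. g t - f t)"
      using inv[OF g] inv[OF f] Rinv_diff[OF g f] by auto
    have M: "\<bar>g t - f t\<bar> \<le> supnorm (\<lambda>t. g t - f t)" if "t \<ge> 0" for t
      unfolding supnorm_def by (rule cSUP_upper[OF _ Cc_bdd[OF h]]) (use that in auto)
    have "Dnorm a (Rinv a (\<lambda>t. g t - f t)) \<le> 3 * supnorm (\<lambda>t. g t - f t)"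
      by (rule Rinv_bound[OF h assms(1)]) (use M in auto)
    then show "Dnorm a (\<lambda>t. the_inv_into (Dspace a R) (Rext a) g t
                          - the_inv_into (Dspace a R) (Rext a) f t) < \<epsilon>"
      unfolding eq using lt by linarith
  qed
qed

end
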